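(* Let $S$ be a training set of examples $(\mathbf{x},y)$ with $\mathbf{x}\in[-1,1]^d$, $y\in\{1,\dots,k\}$, let $\epsilon>0$, and let $W^\star\in\mathbb{R}^{k\times d}$ be an arbitrary matrix. Run ShareBoost on $S$ for $T=\left\lceil \frac{4}{\epsilon}\|W^\star\|_{\infty,1}^2\right\rceil$ iterations and let $W$ be the output matrix. Then $\|W\|_{\infty,0}\le T$ and $L(W)\le L(W^\star)+\epsilon$.
   Context: For $W\in\mathbb{R}^{k\times d}$, $W_{\cdot,i}$ denotes its $i$-th column; $\|W\|_{\infty,0}=|\{i:\|W_{\cdot,i}\|_\infty>0\}|$ is the number of nonzero columns and $\|W\|_{\infty,1}=\sum_{i=1}^d\|W_{\cdot,i}\|_\infty$. The loss of $W$ on $(\mathbf{x},y)$ is $\ell(W,(\mathbf{x},y))=\ln\sum_{y'\in\{1,\dots,k\}}\exp\big(\mathbf{1}[y'\neq y]-(W\mathbf{x})_y+(W\mathbf{x})_{y'}\big)$, and $L(W)=\frac1{|S|}\sum_{(\mathbf{x},y)\in S}\ell(W,(\mathbf{x},y))$. Write $\nabla_r L(W)\in\mathbb{R}^k$ for the $r$-th column of the gradient matrix $\nabla L(W)$. The ShareBoost algorithm: initialize $W=0$, $I=\emptyset$; for $t=1,\dots,T$: choose $r\in\{1,\dots,d\}$ maximizing $\|\nabla_r L(W)\|_1$ (ties broken arbitrarily), set $I\leftarrow I\cup\{r\}$, and set $W\leftarrow\arg\min\{L(V): V\in\mathbb{R}^{k\times d},\ V_{\cdot,i}=0\text{ for all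 }i\notin I\}$ (a minimizer is assumed to be attained at every iteration). *)

theory Defs
  imports "HOL-Analysis.Analysis"
begin

text \<open>Matrices W in R^{k x d} are functions nat => nat => real, entry W j i for row j in {1..k},
column i in {1..d}; entries outside this range are never used.
Examples are pairs (x, y) with x :: nat => real (coordinates 1..d) and y :: nat.
The training set S is a list (duplicates allowed).\<close>

type_synonym mat = "nat \<Rightarrow> nat \<Rightarrow> real"
type_synonym example = "(nat \<Rightarrow> real) \<times> nat"

definition mat_vec :: "nat \<Rightarrow> mat \<Rightarrow> (nat \<Rightarrow> real) \<Rightarrow> nat \<Rightarrow> real" where
  "mat_vec d W x j = (\<Sum>i=1..d. W j i * x i)"

definition loss :: "nat \<Rightarrow> nat \<Rightarrow> mat \<Rightarrow> example \<Rightarrow> real" where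
  "loss k d W e = (case e of (x, y) \<Rightarrow>
     ln (\<Sum>y'=1..k. exp ((if y' \<noteq> y then 1 else 0) - mat_vec d W x y + mat_vec d W x y')))"

definition L :: "example list \<Rightarrow> nat \<Rightarrow> nat \<Rightarrow> mat \<Rightarrow> real" where
  "L S k d W = (\<Sum>e\<leftarrow>S. loss k d W e) / real (length S)"

definition col_inf_norm :: "nat \<Rightarrow> mat \<Rightarrow> nat \<Rightarrow> real" where
  "col_inf_norm k W i = Max ((\<lambda>j. \<bar>W j i\<bar>) ` {1..k})"

definition norm_inf_0 :: "nat \<Rightarrow> nat \<Rightarrow> mat \<Rightarrow> nat" where
  "norm_inf_0 k d W = card {i \<in> {1..d}. col_inf_norm k W i > 0}"

definition norm_inf_1 :: "nat \<Rightarrow> nat \<Rightarrow> mat \<Rightarrow> real" where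
  "norm_inf_1 k d W = (\<Sum>i=1..d. col_inf_norm k W i)"

definition grad_L :: "example list \<Rightarrow> nat \<Rightarrow> nat \<Rightarrow> mat \<Rightarrow> nat \<Rightarrow> nat \<Rightarrow> real" where
  "grad_L S k d W j r =
     deriv (\<lambda>t. L S k d (\<lambda>a b. if a = j \<and> b = r then W a b + t else W a b)) 0"

definition grad_col_l1 :: "example list \<Rightarrow> nat \<Rightarrow> nat \<Rightarrow> mat \<Rightarrow> nat \<Rightarrow> real" where
  "grad_col_l1 S k d W r = (\<Sum>j=1..k. \<bar>grad_L S k d W j r\<bar>)"

definition supported_on :: "nat \<Rightarrow> nat \<Rightarrow> nat set \<Rightarrow> mat \<Rightarrow> bool" where
  "supported_on k d I V \<longleftrightarrow> (\<forall>i\<in>{1..d} - I. \<forall>j\<in>{1..k}. V j i = 0)"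

text \<open>A run of ShareBoost for T iterations: Ws t and Is t are W and I after t iterations,
rs t is the column chosen at iteration t+1. Ties and the choice of minimizer are arbitrary.\<close>
definition shareboost_run ::
  "example list \<Rightarrow> nat \<Rightarrow> nat \<Rightarrow> nat \<Rightarrow> (nat \<Rightarrow> mat) \<Rightarrow> (nat \<Rightarrow> nat set) \<Rightarrow> (nat \<Rightarrow> nat) \<Rightarrow> bool" where
  "shareboost_run S k d T Ws Is rs \<longleftrightarrow>
     Ws 0 = (\<lambda>_ _. 0) \<and> Is 0 = {} \<and>
     (\<forall>t<T.
        rs t \<in> {1..d} \<and>
        (\<forall>r'\<in>{1..d}. grad_col_l1 S k d (Ws t) r' \<le> grad_col_l1 S k d (Ws t) (rs t)) \<and>
        Is (Suc t) = insert (rs t) (Is t) \<and>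
        supported_on k d (Is (Suc t)) (Ws (Suc t)) \<and>
        (\<forall>V. supported_on k d (Is (Suc t)) V \<longrightarrow> L S k d (Ws (Suc t)) \<le> L S k d V))"

end

theory Submission
  imports Defs
begin

lemma one_dim:
  fixes g g1 g2 :: "real \<Rightarrow> real"
  assumes d1: "\<And>s. DERIV g s :> g1 s" and d2: "\<And>s. DERIV g1 s :> g2 s"
    and nn: "\<And>s. 0 \<le> g2 s" and ub: "\<And>s. g2 s \<le> K"
  shows "g 0 + g1 0 \<le> g 1"
    and "0 \<le> s \<Longrightarrow> g s \<le> g 0 + s * g1 0 + K * s^2 / 2"
proof -
  have mono1: "g1 0 \<le> g1 x" if "0 \<le> x" for x
    using DERIV_nonneg_imp_nondecreasing[of 0 x g1] that d2 nn by blast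
  have "(\<lambda>s. g s - s * g1 0) 0 \<le> (\<lambda>s. g s - s * g1 0) 1"
  proof (rule DERIV_nonneg_imp_nondecreasing[of 0 1])
    fix x :: real assume "0 \<le> x" "x \<le> 1"
    have "DERIV (\<lambda>s. g s - s * g1 0) x :> g1 x - 1 * g1 0"
      by (auto intro!: derivative_eq_intros d1)
    then show "\<exists>y. DERIV (\<lambda>s. g s - s * g1 0) x :> y \<and> y \<ge> 0"
      using mono1[OF \<open>0 \<le> x\<close>] by auto
  qed auto
  then show "g 0 + g1 0 \<le> g 1" by simp
next
  assume s0: "0 \<le> s"
  have h1: "g1 x - g1 0 - K * x \<le> 0" if "0 \<le> x" for x
  proof -
    have "(\<lambda>s. g1 s - g1 0 - K * s) x \<le> (\<lambda>s. g1 s - g1 0 - K * s) 0"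
    proof (rule DERIV_nonpos_imp_nonincreasing[of 0 x])
      fix z :: real
      have "DERIV (\<lambda>s. g1 s - g1 0 - K * s) z :> g2 z - K"
        by (auto intro!: derivative_eq_intros d2)
      then show "\<exists>y. DERIV (\<lambda>s. g1 s - g1 0 - K * s) z :> y \<and> y \<le> 0"
        using ub[of z] by auto
    qed (use that in auto)
    then show ?thesis by simp
  qed
  have "(\<lambda>s. g s - g 0 - s * g1 0 - K * s^2 / 2) s \<le> (\<lambda>s. g s - g 0 - s * g1 0 - K * s^2 / 2) 0"
  proof (rule DERIV_nonpos_imp_nonincreasing[of 0 s])
    fix z :: real assume "0 \<le> z"
    have "DERIV (\<lambda>s. g s - g 0 - s * g1 0 - K * s^2 / 2) z :> g1 z - 1 * g1 0 - K * (2 * z) / 2"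
      by (auto intro!: derivative_eq_intros d1)
    then show "\<exists>y. DERIV (\<lambda>s. g s - g 0 - s * g1 0 - K * s^2 / 2) z :> y \<and> y \<le> 0"
      using h1[OF \<open>0 \<le> z\<close>] by auto
  qed (use s0 in auto)
  then show "g s \<le> g 0 + s * g1 0 + K * s^2 / 2" by simp
qed

lemma var_shift:
  fixes B e :: "'j \<Rightarrow> real"
  shows "(\<Sum>j\<in>J. (B j + c)^2 * e j) * (\<Sum>j\<in>J. e j) - (\<Sum>j\<in>J. (B j + c) * e j)^2
       = (\<Sum>j\<in>J. B j^2 * e j) * (\<Sum>j\<in>J. e j) - (\<Sum>j\<in>J. B j * e j)^2"
proof -
  have a: "(\<Sum>j\<in>J. (B j + c)^2 * e j) = (\<Sum>j\<in>J. B j^2 * e j) + 2 * c * (\<Sum>j\<in>J. B j * e j) + c^2 * (\<Sum>j\<in>J. e j)"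
    by (simp add: power2_eq_square algebra_simps sum.distrib sum_distrib_left)
  have b: "(\<Sum>j\<in>J. (B j + c) * e j) = (\<Sum>j\<in>J. B j * e j) + c * (\<Sum>j\<in>J. e j)"
    by (simp add: algebra_simps sum.distrib sum_distrib_left)
  show ?thesis unfolding a b by (simp add: power2_eq_square algebra_simps)
qed

lemma var_nonneg:
  fixes B e :: "'j \<Rightarrow> real"
  assumes "\<And>j. j \<in> J \<Longrightarrow> 0 \<le> e j" "0 < (\<Sum>j\<in>J. e j)"
  shows "(\<Sum>j\<in>J. B j * e j)^2 \<le> (\<Sum>j\<in>J. B j^2 * e j) * (\<Sum>j\<in>J. e j)"
proof -
  define Z where "Z = (\<Sum>j\<in>J. e j)"
  define m where "m = (\<Sum>j\<in>J. B j * e j) / Z"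
  have z: "Z > 0" using assms Z_def by simp
  have "(\<Sum>j\<in>J. (B j + - m) * e j) = (\<Sum>j\<in>J. B j * e j) - m * Z"
    by (simp add: algebra_simps sum.distrib sum_distrib_left sum_subtractf Z_def)
  also have "\<dots> = 0" using z by (simp add: m_def)
  finally have s0: "(\<Sum>j\<in>J. (B j + - m) * e j) = 0" .
  have "0 \<le> (\<Sum>j\<in>J. (B j + - m)^2 * e j) * Z"
    using z assms by (intro mult_nonneg_nonneg sum_nonneg) auto
  then show ?thesis using var_shift[of B "- m" e J] s0 unfolding Z_def by simp
qed

lemma var_le:
  fixes B e :: "'j \<Rightarrow> real"
  assumes "\<And>j. j \<in> J \<Longrightarrow> 0 \<le> e j" "\<And>j. j \<in> J \<Longrightarrow> \<bar>B j + c\<bar> \<le> M"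
  shows "(\<Sum>j\<in>J. B j^2 * e j) * (\<Sum>j\<in>J. e j) - (\<Sum>j\<in>J. B j * e j)^2 \<le> M^2 * (\<Sum>j\<in>J. e j)^2"
proof -
  have "(\<Sum>j\<in>J. (B j + c)^2 * e j) \<le> (\<Sum>j\<in>J. M^2 * e j)"
  proof (rule sum_mono)
    fix j assume j: "j \<in> J"
    have "(B j + c)^2 \<le> M^2" using assms(2)[OF j]
      by (metis abs_ge_zero abs_le_square_iff abs_of_nonneg order_trans)
    then show "(B j + c)^2 * e j \<le> M^2 * e j" using assms(1)[OF j] by (rule mult_right_mono)
  qed
  also have "\<dots> = M^2 * (\<Sum>j\<in>J. e j)" by (simp add: sum_distrib_left)
  finally have "(\<Sum>j\<in>J. (B j + c)^2 * e j) \<le> M^2 * (\<Sum>j\<in>J. e j)" .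
  moreover have "0 \<le> (\<Sum>j\<in>J. e j)" using assms(1) by (simp add: sum_nonneg)
  ultimately have "(\<Sum>j\<in>J. (B j + c)^2 * e j) * (\<Sum>j\<in>J. e j) \<le> (M^2 * (\<Sum>j\<in>J. e j)) * (\<Sum>j\<in>J. e j)"
    by (rule mult_right_mono)
  then have "(\<Sum>j\<in>J. (B j + c)^2 * e j) * (\<Sum>j\<in>J. e j) \<le> M^2 * (\<Sum>j\<in>J. e j)^2"
    by (simp add: power2_eq_square mult.assoc)
  then show ?thesis using var_shift[of B c e J] by (smt (verit) zero_le_power2)
qed

lemma lse:
  fixes A B :: "'j \<Rightarrow> real"
  assumes fin: "finite J" and ne: "J \<noteq> {}" and bd: "\<And>j. j \<in> J \<Longrightarrow> \<bar>B j + c\<bar> \<le> M"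
  shows "ln (\<Sum>j\<in>J. exp (A j)) + (\<Sum>j\<in>J. B j * exp (A j)) / (\<Sum>j\<in>J. exp (A j))
           \<le> ln (\<Sum>j\<in>J. exp (A j + B j))"
    and "0 \<le> s \<Longrightarrow> ln (\<Sum>j\<in>J. exp (A j + s * B j)) \<le> ln (\<Sum>j\<in>J. exp (A j))
           + s * ((\<Sum>j\<in>J. B j * exp (A j)) / (\<Sum>j\<in>J. exp (A j))) + M^2 * s^2 / 2"
    and "DERIV (\<lambda>s. ln (\<Sum>j\<in>J. exp (A j + s * B j))) 0 :> (\<Sum>j\<in>J. B j * exp (A j)) / (\<Sum>j\<in>J. exp (A j))"
proof -
  define Z where "Z s = (\<Sum>j\<in>J. exp (A j + s * B j))" for s
  define Z1 where "Z1 s = (\<Sum>j\<in>J. B j * exp (A j + s * B j))" for s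
  define Z2 where "Z2 s = (\<Sum>j\<in>J. B j^2 * exp (A j + s * B j))" for s
  have Zpos: "Z s > 0" for s unfolding Z_def using fin ne by (intro sum_pos) auto
  have dZ: "DERIV Z s :> Z1 s" for s
    unfolding Z_def Z1_def by (auto intro!: derivative_eq_intros sum.cong)
  have dZ1: "DERIV Z1 s :> Z2 s" for s
    unfolding Z1_def Z2_def by (auto intro!: derivative_eq_intros sum.cong simp: power2_eq_square)
  define g where "g s = ln (Z s)" for s
  define g1 where "g1 s = Z1 s / Z s" for s
  define g2 where "g2 s = (Z2 s * Z s - Z1 s * Z1 s) / (Z s * Z s)" for s
  have d1: "DERIV g s :> g1 s" for s
    unfolding g_def g1_def using dZ[of s] Zpos[of s]
    by (auto intro!: derivative_eq_intros simp: field_simps)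
  have d2: "DERIV g1 s :> g2 s" for s
    unfolding g1_def g2_def using dZ[of s] dZ1[of s] Zpos[of s]
    by (auto intro!: derivative_eq_intros)
  have nn: "0 \<le> g2 s" for s
  proof -
    have "(Z1 s)^2 \<le> Z2 s * Z s"
      using var_nonneg[of J "\<lambda>j. exp (A j + s * B j)" B] Zpos[of s] unfolding Z_def Z1_def Z2_def by simp
    then show ?thesis unfolding g2_def using Zpos[of s] by (simp add: power2_eq_square)
  qed
  have ub: "g2 s \<le> M^2" for s
  proof -
    have "Z2 s * Z s - (Z1 s)^2 \<le> M^2 * (Z s)^2"
      using var_le[of J "\<lambda>j. exp (A j + s * B j)" B c M] bd unfolding Z_def Z1_def Z2_def by simp
    then show ?thesis unfolding g2_def using Zpos[of s] by (simp add: power2_eq_square divide_le_eq)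
  qed
  note od = one_dim[OF d1 d2 nn ub]
  show "ln (\<Sum>j\<in>J. exp (A j)) + (\<Sum>j\<in>J. B j * exp (A j)) / (\<Sum>j\<in>J. exp (A j))
           \<le> ln (\<Sum>j\<in>J. exp (A j + B j))"
    using od(1) unfolding g_def g1_def Z_def Z1_def by simp
  show "0 \<le> s \<Longrightarrow> ln (\<Sum>j\<in>J. exp (A j + s * B j)) \<le> ln (\<Sum>j\<in>J. exp (A j))
           + s * ((\<Sum>j\<in>J. B j * exp (A j)) / (\<Sum>j\<in>J. exp (A j))) + M^2 * s^2 / 2"
    using od(2)[of s] unfolding g_def g1_def Z_def Z1_def by (simp add: mult.commute)
  show "DERIV (\<lambda>s. ln (\<Sum>j\<in>J. exp (A j + s * B j))) 0 :> (\<Sum>j\<in>J. B j * exp (A j)) / (\<Sum>j\<in>J. exp (A j))"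
    using d1[of 0] unfolding g_def g1_def Z_def Z1_def by simp
qed

definition madd :: "mat \<Rightarrow> real \<Rightarrow> mat \<Rightarrow> mat" where
  "madd W s U = (\<lambda>a b. W a b + s * U a b)"

definition av :: "nat \<Rightarrow> mat \<Rightarrow> (nat \<Rightarrow> real) \<Rightarrow> nat \<Rightarrow> nat \<Rightarrow> real" where
  "av d W x y j = (if j \<noteq> y then 1 else 0) - mat_vec d W x y + mat_vec d W x j"

definition bv :: "nat \<Rightarrow> mat \<Rightarrow> (nat \<Rightarrow> real) \<Rightarrow> nat \<Rightarrow> nat \<Rightarrow> real" where
  "bv d U x y j = mat_vec d U x j - mat_vec d U x y"

definition dloss :: "nat \<Rightarrow> nat \<Rightarrow> mat \<Rightarrow> mat \<Rightarrow> example \<Rightarrow> real" where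
  "dloss k d W U e = (case e of (x, y) \<Rightarrow>
     (\<Sum>j=1..k. bv d U x y j * exp (av d W x y j)) / (\<Sum>j=1..k. exp (av d W x y j)))"

definition DL :: "example list \<Rightarrow> nat \<Rightarrow> nat \<Rightarrow> mat \<Rightarrow> mat \<Rightarrow> real" where
  "DL S k d W U = (\<Sum>e\<leftarrow>S. dloss k d W U e) / real (length S)"

lemma mat_vec_madd: "mat_vec d (madd W s U) x j = mat_vec d W x j + s * mat_vec d U x j"
  unfolding mat_vec_def madd_def by (simp add: algebra_simps sum.distrib sum_distrib_left)

lemma av_madd: "av d (madd W s U) x y j = av d W x y j + s * bv d U x y j"
  unfolding av_def bv_def mat_vec_madd by (simp add: algebra_simps)

lemma loss_eq: "loss k d W (x, y) = ln (\<Sum>j=1..k. exp (av d W x y j))"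
  unfolding loss_def by (simp add: av_def)

lemma loss_madd: "loss k d (madd W s U) (x, y) = ln (\<Sum>j=1..k. exp (av d W x y j + s * bv d U x y j))"
  unfolding loss_eq av_madd by simp

lemma madd0[simp]: "madd W 0 U = W" unfolding madd_def by simp

lemma ex_convex:
  assumes "k \<ge> 1"
  shows "loss k d W e + dloss k d W U e \<le> loss k d (madd W 1 U) e"
proof -
  obtain x y where e: "e = (x, y)" by fastforce
  have bd: "\<bar>bv d U x y j + 0\<bar> \<le> (\<Sum>j=1..k. \<bar>bv d U x y j\<bar>)" if "j \<in> {1..k}" for j
    using member_le_sum[of j "{1..k}" "\<lambda>j. \<bar>bv d U x y j\<bar>"] that by simp
  show ?thesis
    using lse(1)[where J="{1..k}" and B="\<lambda>j. bv d U x y j" and c=0 and M="\<Sum>j=1..k. \<bar>bv d U x y j\<bar>" and A="\<lambda>j. av d W x y j", OF _ _ bd] assms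
      loss_madd[of k d W 1 U x y]
    unfolding e loss_eq dloss_def by (auto intro: member_le_sum)
qed

lemma ex_smooth:
  assumes "k \<ge> 1" "0 \<le> s" "\<And>j. j \<in> {1..k} \<Longrightarrow> \<bar>mat_vec d U x j\<bar> \<le> M"
  shows "loss k d (madd W s U) (x, y) \<le> loss k d W (x, y) + s * dloss k d W U (x, y) + M^2 * s^2 / 2"
proof -
  have bd: "\<bar>bv d U x y j + mat_vec d U x y\<bar> \<le> M" if "j \<in> {1..k}" for j
    using assms(3)[OF that] by (simp add: bv_def)
  show ?thesis
    using lse(2)[where J="{1..k}" and B="\<lambda>j. bv d U x y j" and c="mat_vec d U x y" and M=M
        and A="\<lambda>j. av d W x y j" and s=s, OF _ _ bd] assms(1,2)
      loss_madd[of k d W s U x y]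
    unfolding loss_eq dloss_def by auto
qed

lemma ex_deriv:
  assumes "k \<ge> 1"
  shows "DERIV (\<lambda>s. loss k d (madd W s U) e) 0 :> dloss k d W U e"
proof -
  obtain x y where e: "e = (x, y)" by fastforce
  have bd: "\<bar>bv d U x y j + 0\<bar> \<le> (\<Sum>j=1..k. \<bar>bv d U x y j\<bar>)" if "j \<in> {1..k}" for j
    using member_le_sum[of j "{1..k}" "\<lambda>j. \<bar>bv d U x y j\<bar>"] that by simp
  show ?thesis
    using lse(3)[where J="{1..k}" and B="\<lambda>j. bv d U x y j" and c=0 and M="\<Sum>j=1..k. \<bar>bv d U x y j\<bar>" and A="\<lambda>j. av d W x y j", OF _ _ bd] assms
    unfolding e loss_madd dloss_def by auto
qed

lemma sum_list_deriv:
  fixes f :: "'e \<Rightarrow> real \<Rightarrow> real"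
  assumes "\<And>e. e \<in> set S \<Longrightarrow> DERIV (f e) x :> f' e"
  shows "DERIV (\<lambda>s. \<Sum>e\<leftarrow>S. f e s) x :> (\<Sum>e\<leftarrow>S. f' e)"
  using assms
proof (induction S)
  case Nil then show ?case by simp
next
  case (Cons a S)
  have "DERIV (\<lambda>s. f a s + (\<Sum>e\<leftarrow>S. f e s)) x :> f' a + (\<Sum>e\<leftarrow>S. f' e)"
    using Cons by (intro DERIV_add) auto
  then show ?case by simp
qed

lemma L_deriv:
  assumes "k \<ge> 1"
  shows "DERIV (\<lambda>s. L S k d (madd W s U)) 0 :> DL S k d W U"
  unfolding L_def DL_def
  by (intro DERIV_cdivide sum_list_deriv ex_deriv assms)

lemma L_convex:
  assumes "k \<ge> 1"
  shows "L S k d W + DL S k d W U \<le> L S k d (madd W 1 U)"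
proof -
  have "(\<Sum>e\<leftarrow>S. loss k d W e + dloss k d W U e) \<le> (\<Sum>e\<leftarrow>S. loss k d (madd W 1 U) e)"
    by (intro sum_list_mono ex_convex assms)
  then have "(\<Sum>e\<leftarrow>S. loss k d W e + dloss k d W U e) / real (length S) \<le> (\<Sum>e\<leftarrow>S. loss k d (madd W 1 U) e) / real (length S)"
    by (simp add: divide_right_mono)
  then show ?thesis unfolding L_def DL_def by (simp add: sum_list_addf add_divide_distrib)
qed

lemma L_smooth:
  assumes "k \<ge> 1" "0 \<le> s" "\<And>x y j. (x, y) \<in> set S \<Longrightarrow> j \<in> {1..k} \<Longrightarrow> \<bar>mat_vec d U x j\<bar> \<le> M"
  shows "L S k d (madd W s U) \<le> L S k d W + s * DL S k d W U + M^2 * s^2 / 2"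
proof (cases "S = []")
  case True then show ?thesis by (simp add: L_def DL_def)
next
  case False
  have "(\<Sum>e\<leftarrow>S. loss k d (madd W s U) e) \<le> (\<Sum>e\<leftarrow>S. loss k d W e + s * dloss k d W U e + M^2 * s^2 / 2)"
  proof (rule sum_list_mono)
    fix e assume "e \<in> set S"
    then obtain x y where e: "e = (x, y)" and "(x, y) \<in> set S" by (metis surj_pair)
    then show "loss k d (madd W s U) e \<le> loss k d W e + s * dloss k d W U e + M^2 * s^2 / 2"
      using ex_smooth[OF assms(1,2), of d U x M W y] assms(3) by auto
  qed
  also have "\<dots> = (\<Sum>e\<leftarrow>S. loss k d W e) + s * (\<Sum>e\<leftarrow>S. dloss k d W U e) + real (length S) * (M^2 * s^2 / 2)"
    by (simp add: sum_list_addf sum_list_const_mult sum_list_triv)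
  finally have "(\<Sum>e\<leftarrow>S. loss k d (madd W s U) e) / real (length S) \<le>
     ((\<Sum>e\<leftarrow>S. loss k d W e) + s * (\<Sum>e\<leftarrow>S. dloss k d W U e) + real (length S) * (M^2 * s^2 / 2)) / real (length S)"
    by (simp add: divide_right_mono)
  then show ?thesis using False unfolding L_def DL_def by (simp add: add_divide_distrib)
qed

definition H :: "nat \<Rightarrow> nat \<Rightarrow> mat \<Rightarrow> example \<Rightarrow> nat \<Rightarrow> nat \<Rightarrow> real" where
  "H k d W e j i = (case e of (x, y) \<Rightarrow>
     (exp (av d W x y j) / (\<Sum>j'=1..k. exp (av d W x y j')) - (if j = y then 1 else 0)) * x i)"

definition G :: "example list \<Rightarrow> nat \<Rightarrow> nat \<Rightarrow> mat \<Rightarrow> nat \<Rightarrow> nat \<Rightarrow> real" where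
  "G S k d W j i = (\<Sum>e\<leftarrow>S. H k d W e j i) / real (length S)"

lemma dloss_lin:
  assumes y: "y \<in> {1..k}"
  shows "dloss k d W U (x, y) = (\<Sum>j=1..k. \<Sum>i=1..d. U j i * H k d W (x, y) j i)"
proof -
  define E where "E j = exp (av d W x y j)" for j
  define Z where "Z = (\<Sum>j=1..k. E j)"
  define mv where "mv j = mat_vec d U x j" for j
  have Zpos: "Z > 0" unfolding Z_def E_def using y by (intro sum_pos) auto
  have "(\<Sum>j=1..k. \<Sum>i=1..d. U j i * H k d W (x, y) j i) = (\<Sum>j=1..k. (E j / Z - (if j = y then 1 else 0)) * mv j)"
  proof (rule sum.cong[OF refl])
    fix j
    have hH: "H k d W (x, y) j i = (E j / Z - (if j = y then 1 else 0)) * x i" for i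
      by (simp add: H_def E_def Z_def)
    show "(\<Sum>i=1..d. U j i * H k d W (x, y) j i) = (E j / Z - (if j = y then 1 else 0)) * mv j"
      unfolding hH mv_def mat_vec_def by (simp add: sum_distrib_left mult_ac)
  qed
  also have "\<dots> = (\<Sum>j=1..k. E j / Z * mv j) - (\<Sum>j=1..k. (if j = y then mv j else 0))"
  proof -
    have "(\<Sum>j=1..k. (E j / Z - (if j = y then 1 else 0)) * mv j) = (\<Sum>j=1..k. E j / Z * mv j - (if j = y then mv j else 0))"
      by (rule sum.cong[OF refl]) (simp add: algebra_simps)
    then show ?thesis by (simp only: sum_subtractf)
  qed
  also have "\<dots> = (\<Sum>j=1..k. E j / Z * mv j) - mv y" using y by simp
  also have "\<dots> = (\<Sum>j=1..k. (mv j - mv y) * E j) / Z"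
  proof -
    have "(\<Sum>j=1..k. (mv j - mv y) * E j) = (\<Sum>j=1..k. mv j * E j) - mv y * Z"
      unfolding Z_def by (simp add: algebra_simps sum_subtractf sum_distrib_left)
    moreover have "(\<Sum>j=1..k. E j / Z * mv j) = (\<Sum>j=1..k. mv j * E j) / Z"
      by (simp add: sum_divide_distrib mult_ac)
    ultimately show ?thesis using Zpos by (simp add: diff_divide_distrib)
  qed
  finally show ?thesis unfolding dloss_def bv_def E_def Z_def mv_def by simp
qed

lemma sum_list_sum_swap:
  "(\<Sum>e\<leftarrow>S. \<Sum>j\<in>J. f e j) = (\<Sum>j\<in>J. \<Sum>e\<leftarrow>S. f e j)"
  by (induction S) (auto simp: sum.distrib)

lemma DL_lin:
  assumes "\<And>x y. (x, y) \<in> set S \<Longrightarrow> y \<in> {1..k}"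
  shows "DL S k d W U = (\<Sum>j=1..k. \<Sum>i=1..d. U j i * G S k d W j i)"
proof -
  have "(\<Sum>e\<leftarrow>S. dloss k d W U e) = (\<Sum>e\<leftarrow>S. \<Sum>j=1..k. \<Sum>i=1..d. U j i * H k d W e j i)"
  proof (rule arg_cong[where f=sum_list], rule map_cong[OF refl])
    fix e assume "e \<in> set S"
    then obtain x y where "e = (x, y)" "(x, y) \<in> set S" by (metis surj_pair)
    then show "dloss k d W U e = (\<Sum>j=1..k. \<Sum>i=1..d. U j i * H k d W e j i)"
      using dloss_lin assms by auto
  qed
  also have "\<dots> = (\<Sum>j=1..k. \<Sum>i=1..d. U j i * (\<Sum>e\<leftarrow>S. H k d W e j i))"
    by (simp add: sum_list_sum_swap sum_list_const_mult)
  finally show ?thesis unfolding DL_def G_def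
    by (simp add: sum_divide_distrib)
qed

lemma grad_eq:
  assumes "k \<ge> 1" "\<And>x y. (x, y) \<in> set S \<Longrightarrow> y \<in> {1..k}" "j \<in> {1..k}" "r \<in> {1..d}"
  shows "grad_L S k d W j r = G S k d W j r"
proof -
  define U :: mat where "U a b = (if a = j \<and> b = r then 1 else 0)" for a b
  have m: "(\<lambda>a b. if a = j \<and> b = r then W a b + t else W a b) = madd W t U" for t
    unfolding madd_def U_def by (auto intro!: ext)
  have inner: "(\<Sum>i=1..d. U a i * G S k d W a i) = (if a = j then G S k d W j r else 0)" for a
  proof -
    have "(\<Sum>i=1..d. U a i * G S k d W a i) = (\<Sum>i=1..d. if i = r then (if a = j then G S k d W j r else 0) else 0)"
      by (rule sum.cong[OF refl]) (auto simp: U_def)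
    also have "\<dots> = (if a = j then G S k d W j r else 0)" using assms(4) by (simp add: sum.delta')
    finally show ?thesis .
  qed
  have "DL S k d W U = (\<Sum>a=1..k. \<Sum>i=1..d. U a i * G S k d W a i)"
    by (rule DL_lin[OF assms(2)])
  also have "\<dots> = (\<Sum>a=1..k. if a = j then G S k d W j r else 0)"
    by (simp only: inner)
  also have "\<dots> = G S k d W j r" using assms(3) by (simp add: sum.delta')
  finally have "DL S k d W U = G S k d W j r" .
  then show ?thesis
    unfolding grad_L_def m using DERIV_imp_deriv[OF L_deriv[OF assms(1)]] by simp
qed

lemma col_inf_ge: "j \<in> {1..k} \<Longrightarrow> \<bar>W j i\<bar> \<le> col_inf_norm k W i"
  unfolding col_inf_norm_def by (rule Max_ge) auto

lemma col_inf_nonneg: "k \<ge> 1 \<Longrightarrow> 0 \<le> col_inf_norm k W i"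
  using col_inf_ge[of 1 k W i] by simp

lemma supp_run:
  assumes "shareboost_run S k d T Ws Is rs" "t \<le> T"
  shows "supported_on k d (Is t) (Ws t)"
proof (cases t)
  case 0 then show ?thesis using assms unfolding shareboost_run_def supported_on_def by auto
next
  case (Suc t')
  then have "t' < T" using assms by simp
  then have "supported_on k d (Is (Suc t')) (Ws (Suc t'))"
    using assms(1) unfolding shareboost_run_def by blast
  then show ?thesis using Suc by simp
qed

lemma card_run:
  assumes "shareboost_run S k d T Ws Is rs"
  shows "t \<le> T \<Longrightarrow> finite (Is t) \<and> card (Is t) \<le> t"
proof (induction t)
  case 0 then show ?case using assms unfolding shareboost_run_def by auto
next
  case (Suc t)
  then have "Is (Suc t) = insert (rs t) (Is t)" using assms unfolding shareboost_run_def by auto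
  then show ?case using Suc by (auto simp: card_insert_if)
qed

lemma DL_self:
  assumes k: "k \<ge> 1" and hy: "\<And>x y. (x, y) \<in> set S \<Longrightarrow> y \<in> {1..k}"
    and run: "shareboost_run S k d T Ws Is rs" and tT: "t \<le> T"
  shows "DL S k d (Ws t) (Ws t) = 0"
proof -
  have DLl: "DL S k d W' U' = (\<Sum>j=1..k. \<Sum>i=1..d. U' j i * G S k d W' j i)" for W' U'
    by (rule DL_lin) (rule hy)
  show ?thesis
proof (cases t)
  case 0
  then have "Ws t = (\<lambda>_ _. 0)" using run unfolding shareboost_run_def by auto
  then show ?thesis using DLl[of "Ws t" "Ws t"] by simp
next
  case (Suc t')
  define W where "W = Ws t"
  have opt: "\<And>V. supported_on k d (Is t) V \<Longrightarrow> L S k d W \<le> L S k d V"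
    using run tT Suc unfolding shareboost_run_def W_def by auto
  have sup: "supported_on k d (Is t) W" using supp_run[OF run tT] W_def by simp
  have "\<forall>y. \<bar>0 - y\<bar> < 1 \<longrightarrow> L S k d (madd W 0 W) \<le> L S k d (madd W y W)"
  proof (intro allI impI)
    fix y :: real
    have "supported_on k d (Is t) (madd W y W)"
      using sup unfolding supported_on_def madd_def by auto
    then show "L S k d (madd W 0 W) \<le> L S k d (madd W y W)" using opt by simp
  qed
  then show ?thesis
    using DERIV_local_min[OF L_deriv[OF k, of S d W W], of 1] W_def by simp
qed
qed

lemma conv_bound:
  assumes k: "k \<ge> 1" and hy: "\<And>x y. (x, y) \<in> set S \<Longrightarrow> y \<in> {1..k}"
    and z: "DL S k d W W = 0"
  shows "L S k d W - L S k d Ws \<le> (\<Sum>i=1..d. col_inf_norm k Ws i * grad_col_l1 S k d W i)"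
proof -
  have DLl: "DL S k d W' U' = (\<Sum>j=1..k. \<Sum>i=1..d. U' j i * G S k d W' j i)" for W' U'
    by (rule DL_lin) (rule hy)
  define U where "U = (\<lambda>a b. Ws a b - W a b)"
  have m1: "madd W 1 U = Ws" unfolding madd_def U_def by simp
  have "DL S k d W U = DL S k d W Ws - DL S k d W W"
    using DLl[of W U] DLl[of W Ws] DLl[of W W]
    unfolding U_def by (simp add: left_diff_distrib sum_subtractf)
  then have c: "L S k d W + DL S k d W Ws \<le> L S k d Ws"
    using L_convex[OF k, of S d W U] m1 z by simp
  have "- DL S k d W Ws = (\<Sum>j=1..k. \<Sum>i=1..d. - (Ws j i * G S k d W j i))"
    using DLl[of W Ws] by (simp add: sum_negf[symmetric])
  also have "\<dots> = (\<Sum>i=1..d. \<Sum>j=1..k. - (Ws j i * G S k d W j i))"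
    by (rule sum.swap)
  also have "\<dots> \<le> (\<Sum>i=1..d. \<Sum>j=1..k. col_inf_norm k Ws i * \<bar>G S k d W j i\<bar>)"
  proof (intro sum_mono)
    fix i j assume "j \<in> {1..k}"
    then have "\<bar>Ws j i\<bar> \<le> col_inf_norm k Ws i" by (rule col_inf_ge)
    then have "\<bar>Ws j i\<bar> * \<bar>G S k d W j i\<bar> \<le> col_inf_norm k Ws i * \<bar>G S k d W j i\<bar>"
      by (rule mult_right_mono) simp
    moreover have "- (Ws j i * G S k d W j i) \<le> \<bar>Ws j i\<bar> * \<bar>G S k d W j i\<bar>"
      by (metis abs_ge_minus_self abs_mult)
    ultimately show "- (Ws j i * G S k d W j i) \<le> col_inf_norm k Ws i * \<bar>G S k d W j i\<bar>" by linarith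
  qed
  also have "\<dots> = (\<Sum>i=1..d. col_inf_norm k Ws i * grad_col_l1 S k d W i)"
  proof (rule sum.cong[OF refl])
    fix i assume i: "i \<in> {1..d}"
    have "grad_col_l1 S k d W i = (\<Sum>j=1..k. \<bar>G S k d W j i\<bar>)"
      unfolding grad_col_l1_def using grad_eq[OF k hy _ i] by simp
    then show "(\<Sum>j=1..k. col_inf_norm k Ws i * \<bar>G S k d W j i\<bar>) = col_inf_norm k Ws i * grad_col_l1 S k d W i"
      by (simp add: sum_distrib_left)
  qed
  finally show ?thesis using c by linarith
qed

lemma step:
  assumes k: "k \<ge> 1" and hS: "\<And>x y. (x, y) \<in> set S \<Longrightarrow> (\<forall>i\<in>{1..d}. \<bar>x i\<bar> \<le> 1) \<and> y \<in> {1..k}"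
    and run: "shareboost_run S k d T Ws Is rs" and tT: "t < T"
  shows "L S k d (Ws (Suc t)) \<le> L S k d (Ws t) - (grad_col_l1 S k d (Ws t) (rs t))^2 / 2"
proof -
  have hy: "\<And>x y. (x, y) \<in> set S \<Longrightarrow> y \<in> {1..k}" using hS by blast
  define W where "W = Ws t"
  define r where "r = rs t"
  define g where "g = grad_col_l1 S k d W r"
  have rd: "r \<in> {1..d}" and Isuc: "Is (Suc t) = insert r (Is t)"
    and opt: "\<And>V. supported_on k d (Is (Suc t)) V \<Longrightarrow> L S k d (Ws (Suc t)) \<le> L S k d V"
    using run tT unfolding shareboost_run_def r_def by auto
  have supW: "supported_on k d (Is t) W" using supp_run[OF run] tT W_def by simp
  define U :: mat where "U a b = (if b = r then - sgn (G S k d W a b) else 0)" for a b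
  have geq: "g = (\<Sum>j=1..k. \<bar>G S k d W j r\<bar>)"
    unfolding g_def grad_col_l1_def using grad_eq[OF k hy _ rd] by simp
  have g0: "0 \<le> g" unfolding g_def grad_col_l1_def by (simp add: sum_nonneg)
  have inner: "(\<Sum>i=1..d. U j i * G S k d W j i) = - \<bar>G S k d W j r\<bar>" for j
  proof -
    have "(\<Sum>i=1..d. U j i * G S k d W j i) = (\<Sum>i=1..d. if i = r then - \<bar>G S k d W j r\<bar> else 0)"
      by (rule sum.cong[OF refl]) (auto simp: U_def sgn_if)
    also have "\<dots> = - \<bar>G S k d W j r\<bar>" using rd by (simp add: sum.delta')
    finally show ?thesis .
  qed
  have DLU: "DL S k d W U = - g"
  proof -
    have "DL S k d W U = (\<Sum>j=1..k. \<Sum>i=1..d. U j i * G S k d W j i)"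
      by (rule DL_lin) (rule hy)
    also have "\<dots> = - g" unfolding inner geq by (simp add: sum_negf)
    finally show ?thesis .
  qed
  have bd: "\<bar>mat_vec d U x j\<bar> \<le> 1" if "(x, y) \<in> set S" "j \<in> {1..k}" for x y j
  proof -
    have "mat_vec d U x j = (\<Sum>i=1..d. if i = r then - sgn (G S k d W j r) * x r else 0)"
      unfolding mat_vec_def by (rule sum.cong[OF refl]) (auto simp: U_def)
    also have "\<dots> = - sgn (G S k d W j r) * x r" using rd by (simp add: sum.delta')
    finally have "\<bar>mat_vec d U x j\<bar> = \<bar>sgn (G S k d W j r)\<bar> * \<bar>x r\<bar>" by (simp add: abs_mult)
    moreover have "\<bar>x r\<bar> \<le> 1" using hS[OF that(1)] rd by blast
    moreover have "\<bar>sgn (G S k d W j r)\<bar> \<le> 1" by (simp add: abs_sgn_eq)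
    ultimately show ?thesis by (simp add: mult_le_one)
  qed
  have sm: "L S k d (madd W g U) \<le> L S k d W + g * DL S k d W U + 1^2 * g^2 / 2"
    using L_smooth[OF k g0, of S d U 1 W] bd by blast
  have "supported_on k d (Is (Suc t)) (madd W g U)"
    using supW unfolding supported_on_def Isuc madd_def U_def by auto
  then have "L S k d (Ws (Suc t)) \<le> L S k d (madd W g U)" by (rule opt)
  then show ?thesis using sm DLU unfolding W_def[symmetric] r_def[symmetric] g_def[symmetric]
    by (simp add: power2_eq_square)
qed

lemma recip_step:
  fixes x y c :: real
  assumes "0 < x" "0 < y" "0 < c" "y \<le> x - x^2 / c"
  shows "1 / x + 1 / c \<le> 1 / y"
proof -
  have e: "(x - x^2 / c) * (1 / x + 1 / c) = 1 - (x / c)^2"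
    using assms(1,3) by (simp add: field_simps power2_eq_square)
  have "y * (1 / x + 1 / c) \<le> (x - x^2 / c) * (1 / x + 1 / c)"
    using assms by (intro mult_right_mono) auto
  then have "y * (1 / x + 1 / c) \<le> 1" unfolding e by (smt (verit) zero_le_power2)
  then show ?thesis using assms(2) by (simp add: le_divide_eq mult.commute)
qed

lemma recur:
  fixes e :: "nat \<Rightarrow> real"
  assumes h: "\<And>t. t < T \<Longrightarrow> \<exists>g\<ge>0. e t \<le> B * g \<and> e (Suc t) \<le> e t - g^2 / 2"
  shows "t \<le> T \<Longrightarrow> 0 < e t \<Longrightarrow> real t / (2 * B^2) \<le> 1 / e t"
proof (induction t)
  case 0 then show ?case by simp
next
  case (Suc t)
  obtain g where g0: "0 \<le> g" and g1: "e t \<le> B * g" and g2: "e (Suc t) \<le> e t - g^2 / 2"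
    using h[of t] Suc.prems by auto
  have "0 \<le> g^2 / 2" by simp
  then have et: "0 < e t" using Suc.prems g2 by linarith
  have IH: "real t / (2 * B^2) \<le> 1 / e t" using Suc et by simp
  have Bpos: "0 < B"
  proof (rule ccontr)
    assume "\<not> 0 < B"
    then have "B * g \<le> 0" using g0 by (simp add: mult_nonpos_nonneg)
    then show False using g1 et by simp
  qed
  have "e t / B \<le> g" using g1 Bpos by (simp add: divide_le_eq mult.commute)
  then have "(e t / B)^2 \<le> g^2" using et Bpos by (intro power_mono) auto
  then have "e t ^ 2 / (2 * B^2) \<le> g^2 / 2" by (simp add: power_divide)
  then have "e (Suc t) \<le> e t - e t ^ 2 / (2 * B^2)" using g2 by simp
  then have "1 / e t + 1 / (2 * B^2) \<le> 1 / e (Suc t)"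
    using recip_step[of "e t" "e (Suc t)" "2 * B^2"] et Suc.prems Bpos by simp
  moreover have "real (Suc t) / (2 * B^2) = real t / (2 * B^2) + 1 / (2 * B^2)"
    by (simp add: add_divide_distrib)
  ultimately show ?case using IH by simp
qed

theorem theorem2:
  fixes S :: "example list" and k d :: nat and \<epsilon> :: real and Wstar :: mat
    and Ws :: "nat \<Rightarrow> mat" and Is :: "nat \<Rightarrow> nat set" and rs :: "nat \<Rightarrow> nat" and T :: nat
  assumes "k \<ge> 1"
    and "\<forall>(x, y) \<in> set S. (\<forall>i\<in>{1..d}. \<bar>x i\<bar> \<le> 1) \<and> y \<in> {1..k}"
    and "\<epsilon> > 0"
    and "T = nat \<lceil>4 / \<epsilon> * (norm_inf_1 k d Wstar)\<^sup>2\<rceil>"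
    and "shareboost_run S k d T Ws Is rs"
  shows "norm_inf_0 k d (Ws T) \<le> T \<and> L S k d (Ws T) \<le> L S k d Wstar + \<epsilon>"
proof -
  note k = assms(1) and run = assms(5)
  have hS: "\<And>x y. (x, y) \<in> set S \<Longrightarrow> (\<forall>i\<in>{1..d}. \<bar>x i\<bar> \<le> 1) \<and> y \<in> {1..k}"
    using assms(2) by blast
  have hy: "\<And>x y. (x, y) \<in> set S \<Longrightarrow> y \<in> {1..k}" using hS by blast
  define B where "B = norm_inf_1 k d Wstar"
  define e where "e t = L S k d (Ws t) - L S k d Wstar" for t
  have cnn: "0 \<le> col_inf_norm k Wstar i" for i using col_inf_nonneg[OF k] .
  have B0: "0 \<le> B" unfolding B_def norm_inf_1_def using cnn by (simp add: sum_nonneg)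
  have cb: "e t \<le> (\<Sum>i=1..d. col_inf_norm k Wstar i * grad_col_l1 S k d (Ws t) i)" if "t \<le> T" for t
    unfolding e_def by (rule conv_bound[OF k hy DL_self[OF k hy run that]])
  have h: "\<exists>g\<ge>0. e t \<le> B * g \<and> e (Suc t) \<le> e t - g^2 / 2" if tT: "t < T" for t
  proof (intro exI conjI)
    define g where "g = grad_col_l1 S k d (Ws t) (rs t)"
    show "0 \<le> g" unfolding g_def grad_col_l1_def by (simp add: sum_nonneg)
    have le: "grad_col_l1 S k d (Ws t) i \<le> g" if "i \<in> {1..d}" for i
      using run tT that unfolding shareboost_run_def g_def by auto
    have "e t \<le> (\<Sum>i=1..d. col_inf_norm k Wstar i * grad_col_l1 S k d (Ws t) i)"
      using cb tT by simp
    also have "\<dots> \<le> (\<Sum>i=1..d. col_inf_norm k Wstar i * g)"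
      by (intro sum_mono mult_left_mono le cnn)
    also have "\<dots> = B * g" unfolding B_def norm_inf_1_def by (simp add: sum_distrib_right)
    finally show "e t \<le> B * g" .
    show "e (Suc t) \<le> e t - g^2 / 2"
      using step[OF k hS run tT] unfolding e_def g_def by simp
  qed
  have part2: "e T \<le> \<epsilon>"
  proof (rule ccontr)
    assume "\<not> e T \<le> \<epsilon>"
    then have eT: "0 < e T" "\<epsilon> < e T" using assms(3) by auto
    have Bpos: "0 < B"
    proof (rule ccontr)
      assume "\<not> 0 < B"
      then have "B = 0" using B0 by simp
      then have "\<forall>i\<in>{1..d}. col_inf_norm k Wstar i = 0"
        unfolding B_def norm_inf_1_def using cnn by (simp add: sum_nonneg_eq_0_iff)
      then have "e T \<le> 0" using cb[of T] by simp
      then show False using eT by simp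
    qed
    have r: "real T / (2 * B^2) \<le> 1 / e T" using recur[where T=T and e=e and B=B and t=T, OF h] eT by simp
    have "4 / \<epsilon> * B^2 \<le> real T" unfolding assms(4) B_def by (rule real_nat_ceiling_ge)
    then have "4 / \<epsilon> * B^2 / (2 * B^2) \<le> real T / (2 * B^2)"
      using Bpos by (intro divide_right_mono) auto
    moreover have "4 / \<epsilon> * B^2 / (2 * B^2) = 2 / \<epsilon>" using Bpos by (simp add: field_simps power2_eq_square)
    ultimately have "2 / \<epsilon> \<le> 1 / e T" using r by simp
    then have "2 * e T \<le> \<epsilon>" using eT assms(3) by (simp add: field_simps)
    then show False using eT by simp
  qed
  have part1: "norm_inf_0 k d (Ws T) \<le> T"
  proof -
    have fin: "finite (Is T)" and cardT: "card (Is T) \<le> T" using card_run[OF run, of T] by auto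
    have sup: "supported_on k d (Is T) (Ws T)" using supp_run[OF run] by simp
    have "{i \<in> {1..d}. col_inf_norm k (Ws T) i > 0} \<subseteq> Is T"
    proof
      fix i assume i: "i \<in> {i \<in> {1..d}. col_inf_norm k (Ws T) i > 0}"
      show "i \<in> Is T"
      proof (rule ccontr)
        assume "i \<notin> Is T"
        then have z: "\<forall>j\<in>{1..k}. Ws T j i = 0" using sup i unfolding supported_on_def by auto
        have "col_inf_norm k (Ws T) i \<in> (\<lambda>j. \<bar>Ws T j i\<bar>) ` {1..k}"
          unfolding col_inf_norm_def using k by (intro Max_in) auto
        then have "col_inf_norm k (Ws T) i = 0" using z by auto
        then show False using i by simp
      qed
    qed
    then have "norm_inf_0 k d (Ws T) \<le> card (Is T)"
      unfolding norm_inf_0_def by (rule card_mono[OF fin])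
    then show ?thesis using cardT by simp
  qed
  show ?thesis using part1 part2 unfolding e_def by simp
qed

end
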